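(* Let $k$ be a positive integer and $p=t=\frac{k+1}{k+2}$. If $k>1$, bold play is optimal, i.e. $\pi(p,p)=p$. If $k=1$ (so $p=t=\frac23$), the stake sequence $c_1=c_2=c_3=\frac13$, $c_i=0$ for $i\ge4$, is optimal, i.e. $\pi(\frac23,\frac23)=\mathbf P(c_1\beta_1+c_2\beta_2+c_3\beta_3\ge\frac23)$ for these $c_i$.
   Context: Let $\beta_1,\beta_2,\ldots$ be independent Bernoulli random variables with success probability $p$. A stake sequence is a sequence $\gamma=(c_1,c_2,\ldots)$ of non-negative reals with $c_1\ge c_2\ge\cdots$ and $\sum_i c_i=1$; write $S_\gamma=\sum_i c_i\beta_i$. For $0\le p\le t\le 1$ define $\pi(p,t)=\sup\{\mathbf P(S_\gamma\ge t)\mid \gamma \text{ a stake sequence}\}$. Bold play for threshold $t$ is the stake sequence with $c_i=\frac1m$ for $i\le m$ and $c_i=0$ for $i>m$, where $m=\lfloor 1/t\rfloor$; it is optimal if it attains $\pi(p,t)$. For $t>\frac12$ bold play is $c_1=1$, with success probability $p$. *)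

theory Defs
  imports "HOL-Probability.Probability"
begin

text \<open>Indices are shifted: the paper's c_1, c_2, ... are c 0, c 1, ...\<close>

definition stake_seq :: "(nat \<Rightarrow> real) \<Rightarrow> bool" where
  "stake_seq c \<longleftrightarrow> (\<forall>i. 0 \<le> c i) \<and> (\<forall>i. c (Suc i) \<le> c i) \<and> c sums 1"

definition bern_space :: "real \<Rightarrow> (nat \<Rightarrow> bool) measure" where
  "bern_space p = PiM UNIV (\<lambda>_::nat. measure_pmf (bernoulli_pmf p))"

definition stake_sum :: "(nat \<Rightarrow> real) \<Rightarrow> (nat \<Rightarrow> bool) \<Rightarrow> real" where
  "stake_sum c \<omega> = (\<Sum>i. c i * of_bool (\<omega> i))"

definition success_prob :: "real \<Rightarrow> (nat \<Rightarrow> real) \<Rightarrow> real \<Rightarrow> real" where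
  "success_prob p c t =
     measure (bern_space p) {\<omega> \<in> space (bern_space p). stake_sum c \<omega> \<ge> t}"

definition pi_val :: "real \<Rightarrow> real \<Rightarrow> real" where
  "pi_val p t = Sup {success_prob p c t | c. stake_seq c}"

definition bold_play :: "real \<Rightarrow> nat \<Rightarrow> real" where
  "bold_play t = (let m = nat \<lfloor>1 / t\<rfloor> in (\<lambda>i. if i < m then 1 / real m else 0))"

end

theory Submission
  imports Defs
begin

lemma card_2_le: "card {i,j} \<le> 2" by (simp add: card_insert_if)
lemma card_3_le: "card {i,j,k} \<le> 3" by (simp add: card_insert_if)

lemma comb_bound:
  fixes m :: nat and L :: "nat \<Rightarrow> real" and x y :: real
  assumes m3: "m \<ge> 3" and L0: "\<And>j. 0 \<le> L j" and x0: "x > 0" and y0: "y \<ge> 0"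
    and tot: "x + y + (\<Sum>j<m. L j) = 1" and y0x: "y = 0 \<Longrightarrow> x = 1"
  defines "W \<equiv> \<lambda>a b j. L j + (if a = j then x else 0) + (if b = j then y else 0)"
  defines "Z \<equiv> \<lambda>a b. card {j. j < m \<and> W a b j \<le> 1 / real m}"
  shows "(\<Sum>ab\<in>{..<m}\<times>{..<m}. real (Z (fst ab) (snd ab))) \<le> (if m = 3 then 20 else real m ^ 2 * (real m - 1))"
proof -
  define q where "q = 1 / real m"
  have mpos: "real m > 0" using m3 by simp
  have mq: "real m * q = 1" using mpos by (simp add: q_def)
  have sumW: "(\<Sum>j<m. W a b j) = 1" if "a < m" "b < m" for a b
  proof -
    have "(\<Sum>j<m. W a b j) = (\<Sum>j<m. L j) + (\<Sum>j<m. (if a = j then x else 0)) + (\<Sum>j<m. (if b = j then y else 0))"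
      by (simp add: W_def sum.distrib)
    also have "\<dots> = (\<Sum>j<m. L j) + x + y" using that by (simp add: sum.delta)
    finally show ?thesis using tot by simp
  qed
  define D where "D = {ab \<in> {..<m}\<times>{..<m}. \<forall>j<m. W (fst ab) (snd ab) j = q}"
  define G where "G = {ab \<in> {..<m}\<times>{..<m}. Z (fst ab) (snd ab) + 2 \<le> m}"
  have Zle: "Z a b \<le> m" for a b
  proof -
    have "Z a b \<le> card {..<m}" unfolding Z_def by (rule card_mono) auto
    then show ?thesis by simp
  qed
  have P1: "Z a b + 1 \<le> m" if "a < m" "b < m" "(a,b) \<notin> D" for a b
  proof (rule ccontr)
    assume "\<not> Z a b + 1 \<le> m"
    then have "Z a b = m" using Zle[of a b] by simp
    then have eq: "{j. j < m \<and> W a b j \<le> q} = {..<m}"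
      unfolding Z_def q_def by (intro card_subset_eq) auto
    then have le: "\<forall>j<m. W a b j \<le> q" by auto
    have "(\<Sum>j<m. q - W a b j) = 0" using sumW[OF that(1,2)] mq
      by (simp add: sum_subtractf)
    then have "\<forall>j\<in>{..<m}. q - W a b j = 0"
      by (subst sum_nonneg_eq_0_iff[symmetric]) (use le in auto)
    then have "(a,b) \<in> D" using that unfolding D_def by auto
    with that show False by simp
  qed
  have DG: "D \<inter> G = {}"
  proof -
    { fix a b assume d: "(a,b) \<in> D" and g: "(a,b) \<in> G"
      then have "{j. j < m \<and> W a b j \<le> q} = {..<m}" unfolding D_def by auto
      then have "Z a b = m" unfolding Z_def q_def by simp
      with g have False unfolding G_def using m3 by simp }
    then show ?thesis by auto
  qed
  have pt: "real (Z a b) \<le> (real m - 1) + of_bool ((a,b) \<in> D) - of_bool ((a,b) \<in> G)"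
    if "a < m" "b < m" for a b
  proof (cases "(a,b) \<in> D")
    case True
    then have "(a,b) \<notin> G" using DG by auto
    then show ?thesis using True Zle[of a b] by simp
  next
    case False
    show ?thesis
    proof (cases "(a,b) \<in> G")
      case True then show ?thesis using False unfolding G_def by auto
    next
      case F2: False
      then show ?thesis using False P1[OF that False] by simp
    qed
  qed
  have DGsub: "D \<subseteq> {..<m}\<times>{..<m}" "G \<subseteq> {..<m}\<times>{..<m}" unfolding D_def G_def by auto
  have "(\<Sum>ab\<in>{..<m}\<times>{..<m}. real (Z (fst ab) (snd ab)))
      \<le> (\<Sum>ab\<in>{..<m}\<times>{..<m}. (real m - 1) + of_bool (ab \<in> D) - of_bool (ab \<in> G))"
  proof (rule sum_mono)
    fix ab :: "nat \<times> nat" assume "ab \<in> {..<m}\<times>{..<m}"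
    then show "real (Z (fst ab) (snd ab)) \<le> (real m - 1) + of_bool (ab \<in> D) - of_bool (ab \<in> G)"
      using pt[of "fst ab" "snd ab"] by auto
  qed
  also have "\<dots> = real m ^ 2 * (real m - 1) + real (card D) - real (card G)"
  proof -
    have "(\<Sum>ab\<in>{..<m}\<times>{..<m}. (of_bool (ab \<in> D) :: real)) = real (card D)"
      using DGsub(1) by (simp add: sum.If_cases Int_absorb1 )
    moreover have "(\<Sum>ab\<in>{..<m}\<times>{..<m}. (of_bool (ab \<in> G) :: real)) = real (card G)"
      using DGsub(2) by (simp add: sum.If_cases Int_absorb1)
    ultimately show ?thesis by (simp add: sum.distrib sum_subtractf power2_eq_square)
  qed
  finally have main: "(\<Sum>ab\<in>{..<m}\<times>{..<m}. real (Z (fst ab) (snd ab))) \<le> real m ^ 2 * (real m - 1) + real (card D) - real (card G)" .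
  have Dfin: "finite D" "finite G" using DGsub by (auto intro: finite_subset)
  have Dy: "y > 0" if "D \<noteq> {}"
  proof (rule ccontr)
    assume "\<not> y > 0"
    then have "y = 0" "x = 1" using y0 y0x by auto
    from that obtain i j where ij: "(i,j) \<in> D" by auto
    then have "W i j i = q" "i < m" unfolding D_def by auto
    then have "L i + 1 = q" using \<open>x = 1\<close> \<open>y = 0\<close> unfolding W_def by (simp split: if_splits)
    moreover have "q < 1" using m3 unfolding q_def by simp
    ultimately show False using L0[of i] by simp
  qed
  have Dcard: "card D \<le> 2"
  proof (cases "D = {}")
    case True then show ?thesis by simp
  next
    case False
    then have ypos: "y > 0" using Dy by simp
    from False obtain i j where ij: "(i,j) \<in> D" by auto
    have "D \<subseteq> {(i,j),(j,i)}"
    proof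
      fix ab assume ab: "ab \<in> D"
      obtain a b where abe: "ab = (a,b)" by (cases ab)
      have E: "W a b l = W i j l" if "l < m" for l
        using ab ij that unfolding D_def abe by auto
      have lt: "a < m" "b < m" "i < m" "j < m" using ab ij unfolding D_def abe by auto
      have e1: "(if a = l then x else 0) + (if b = l then y else 0) = (if i = l then x else 0) + (if j = l then y else 0)"
        if "l < m" for l using E[OF that] unfolding W_def by simp
      note e = e1[OF lt(1)] e1[OF lt(2)] e1[OF lt(3)] e1[OF lt(4)]
      have "(a,b) = (i,j) \<or> (a,b) = (j,i)"
        using e x0 ypos by (smt (verit) prod.inject)
      then show "ab \<in> {(i,j),(j,i)}" using abe by auto
    qed
    then have "card D \<le> card {(i,j),(j,i)}" by (intro card_mono) auto
    also have "\<dots> \<le> 2" by (rule card_2_le)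
    finally show ?thesis .
  qed
  have Gcard: "card G \<ge> 2" if "D \<noteq> {}" "m \<ge> 4"
  proof -
    have ypos: "y > 0" using Dy that by simp
    from that obtain i j where ij: "(i,j) \<in> D" by auto
    have ne1: "{..<3::nat} - {i,j} \<noteq> {}"
    proof
      assume "{..<3::nat} - {i,j} = {}"
      then have "{..<3::nat} \<subseteq> {i,j}" by auto
      then have "card {..<3::nat} \<le> card {i,j}" by (intro card_mono) auto
      moreover have "card {i,j} \<le> 2" by (rule card_2_le)
      ultimately show False by simp
    qed
    then obtain a :: nat where a: "a < 3" "a \<noteq> i" "a \<noteq> j" by auto
    have ne2: "{..<4::nat} - {i,j,a} \<noteq> {}"
    proof
      assume "{..<4::nat} - {i,j,a} = {}"
      then have "{..<4::nat} \<subseteq> {i,j,a}" by auto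
      then have "card {..<4::nat} \<le> card {i,j,a}" by (intro card_mono) auto
      moreover have "card {i,j,a} \<le> 3" by (rule card_3_le)
      ultimately show False by simp
    qed
    then obtain b :: nat where b: "b < 4" "b \<noteq> i" "b \<noteq> j" "b \<noteq> a" by auto
    have am: "a < m" "b < m" using a b that by auto
    have Wij: "W i j l = q" if "l < m" for l using ij that unfolding D_def by auto
    have La: "L a = q" using Wij[OF am(1)] a unfolding W_def by simp
    have Lb: "L b = q" using Wij[OF am(2)] b unfolding W_def by simp
    have Zab: "Z a b + 2 \<le> m" "Z b a + 2 \<le> m"
    proof -
      have Wa: "W a b a > q" "W b a a > q" using La x0 ypos b(4) unfolding W_def by auto
      have Wb: "W a b b > q" "W b a b > q" using Lb x0 ypos b(4) unfolding W_def by auto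
      note Wa' = Wa(2) and Wb' = Wb(2)
      have s1: "{l. l < m \<and> W a b l \<le> q} \<subseteq> {..<m} - {a,b}"
        using Wa Wb by auto
      have s2: "{l. l < m \<and> W b a l \<le> q} \<subseteq> {..<m} - {a,b}"
        using Wa' Wb' by auto
      have c: "card ({..<m} - {a,b}) = m - 2" using am b(4) by (simp add: card_Diff_subset)
      have "Z a b \<le> m - 2" unfolding Z_def q_def[symmetric] using card_mono[OF _ s1] c by simp
      moreover have "Z b a \<le> m - 2" unfolding Z_def q_def[symmetric] using card_mono[OF _ s2] c by simp
      ultimately show "Z a b + 2 \<le> m" "Z b a + 2 \<le> m" using that(2) by auto
    qed
    have "{(a,b),(b,a)} \<subseteq> G" unfolding G_def using Zab am by auto
    then have "card {(a,b),(b,a)} \<le> card G" using Dfin by (intro card_mono) auto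
    moreover have "card {(a,b),(b,a)} = 2" using b(4) by simp
    ultimately show ?thesis by simp
  qed
  show ?thesis
  proof (cases "m = 3")
    case True
    then show ?thesis using main Dcard by simp
  next
    case False
    then have m4: "m \<ge> 4" using m3 by simp
    have "real (card D) \<le> real (card G)"
    proof (cases "D = {}")
      case True then show ?thesis by simp
    next
      case False then show ?thesis using Gcard[OF False m4] Dcard by simp
    qed
    then show ?thesis using main False by simp
  qed
qed

lemma map_pmf_mod:
  fixes m j :: nat
  assumes m: "m > 0" and j: "j < m"
  shows "map_pmf (\<lambda>x. x mod m \<noteq> j) (pmf_of_set {..<m}) = bernoulli_pmf (1 - 1 / real m)"
proof (rule pmf_eqI)
  fix b :: bool
  have ne: "{..<m} \<noteq> {}" using m by auto
  have p01: "0 \<le> 1 - 1 / real m" "1 - 1 / real m \<le> 1" using m by (auto simp: field_simps)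
  have "pmf (map_pmf (\<lambda>x. x mod m \<noteq> j) (pmf_of_set {..<m})) b
      = measure (measure_pmf (pmf_of_set {..<m})) ((\<lambda>x. x mod m \<noteq> j) -` {b})"
    by (rule pmf_map)
  also have "\<dots> = real (card ({..<m} \<inter> ((\<lambda>x. x mod m \<noteq> j) -` {b}))) / real m"
    using ne by (simp add: measure_pmf_of_set)
  also have "\<dots> = pmf (bernoulli_pmf (1 - 1 / real m)) b"
  proof (cases b)
    case True
    have e: "{..<m} \<inter> ((\<lambda>x. x mod m \<noteq> j) -` {True}) = {..<m} - {j}" by (rule set_eqI) auto
    have "card ({..<m} \<inter> ((\<lambda>x. x mod m \<noteq> j) -` {b})) = m - 1" using j True e by simp
    then show ?thesis using True p01 m by (simp add: of_nat_diff field_simps)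
  next
    case False
    have e: "{..<m} \<inter> ((\<lambda>x. x mod m \<noteq> j) -` {False}) = {j}" using j by (intro set_eqI) auto
    have "{..<m} \<inter> ((\<lambda>x. x mod m \<noteq> j) -` {b}) = {j}" using e False by simp
    then show ?thesis using False p01 m by simp
  qed
  finally show "pmf (map_pmf (\<lambda>x. x mod m \<noteq> j) (pmf_of_set {..<m})) b = pmf (bernoulli_pmf (1 - 1 / real m)) b" .
qed

lemma distr_class:
  fixes m j :: nat
  assumes m: "m > 0" and j: "j < m"
  shows "distr (PiM UNIV (\<lambda>_. measure_pmf (pmf_of_set {..<m}))) (bern_space (1 - 1 / real m)) (\<lambda>\<sigma> i. \<sigma> i mod m \<noteq> j)
       = bern_space (1 - 1 / real m)"
proof -
  let ?U = "measure_pmf (pmf_of_set {..<m})"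
  let ?B = "measure_pmf (bernoulli_pmf (1 - 1 / real m))"
  let ?f = "\<lambda>x::nat. x mod m \<noteq> j"
  interpret U: product_prob_space "\<lambda>_. ?U" "UNIV :: nat set" by (intro product_prob_spaceI prob_space_measure_pmf)
  interpret B: product_prob_space "\<lambda>_. ?B" "UNIV :: nat set" by (intro product_prob_spaceI prob_space_measure_pmf)
  have meas: "(\<lambda>\<sigma> i. \<sigma> i mod m \<noteq> j) \<in> measurable (PiM UNIV (\<lambda>_. ?U)) (PiM UNIV (\<lambda>_. ?B))"
    by (rule measurable_PiM_single') (auto simp: space_PiM)
  have eqA: "emeasure ?U {x. ?f x \<in> A} = emeasure ?B A" for A
  proof -
    have "emeasure ?B A = emeasure (measure_pmf (map_pmf ?f (pmf_of_set {..<m}))) A"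
      using map_pmf_mod[OF m j] by simp
    also have "\<dots> = emeasure (distr ?U (count_space UNIV) ?f) A"
      by (simp add: map_pmf_rep_eq)
    also have "\<dots> = emeasure ?U (?f -` A \<inter> space ?U)"
      by (rule emeasure_distr) auto
    also have "\<dots> = emeasure ?U {x. ?f x \<in> A}" by (simp add: vimage_def)
    finally show ?thesis by simp
  qed
  show ?thesis
    unfolding bern_space_def
  proof (rule B.PiM_eq)
    fix J F assume J: "finite J" "J \<subseteq> (UNIV :: nat set)" and F: "\<And>j. j \<in> J \<Longrightarrow> F j \<in> sets ?B"
    let ?X = "prod_emb UNIV (\<lambda>_. ?B) J (\<Pi>\<^sub>E j\<in>J. F j)"
    have X: "?X \<in> sets (PiM UNIV (\<lambda>_. ?B))"
      using J F by (intro sets_PiM_I) auto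
    have pre: "(\<lambda>\<sigma> i. \<sigma> i mod m \<noteq> j) -` ?X \<inter> space (PiM UNIV (\<lambda>_. ?U))
        = {\<sigma> \<in> space (PiM UNIV (\<lambda>_. ?U)). \<forall>i\<in>J. \<sigma> i \<in> {x. ?f x \<in> F i}}"
      by (auto simp: prod_emb_def space_PiM PiE_iff)
    have "emeasure (distr (PiM UNIV (\<lambda>_. ?U)) (PiM UNIV (\<lambda>_. ?B)) (\<lambda>\<sigma> i. \<sigma> i mod m \<noteq> j)) ?X
        = emeasure (PiM UNIV (\<lambda>_. ?U)) ((\<lambda>\<sigma> i. \<sigma> i mod m \<noteq> j) -` ?X \<inter> space (PiM UNIV (\<lambda>_. ?U)))"
      by (rule emeasure_distr[OF meas X])
    also have "\<dots> = (\<Prod>i\<in>J. emeasure ?U {x. ?f x \<in> F i})"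
      unfolding pre using J by (intro U.emeasure_PiM_Collect) auto
    also have "\<dots> = (\<Prod>i\<in>J. emeasure ?B (F i))"
      by (simp add: eqA)
    finally show "emeasure (distr (PiM UNIV (\<lambda>_. ?U)) (PiM UNIV (\<lambda>_. ?B)) (\<lambda>\<sigma> i. \<sigma> i mod m \<noteq> j)) ?X
        = (\<Prod>i\<in>J. emeasure ?B (F i))" .
  qed (rule sets_distr)
qed


lemma iter_avg:
  fixes m :: nat and g :: "(nat \<Rightarrow> nat) \<Rightarrow> real" and K :: real
  assumes m: "m > 0"
  assumes g: "g \<in> borel_measurable (PiM UNIV (\<lambda>_. measure_pmf (pmf_of_set {..<m})))"
  assumes bnd: "\<And>x. \<bar>g x\<bar> \<le> K"
  shows "integral\<^sup>L (PiM UNIV (\<lambda>_. measure_pmf (pmf_of_set {..<m}))) g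
       = (\<Sum>a<m. integral\<^sup>L (PiM UNIV (\<lambda>_. measure_pmf (pmf_of_set {..<m}))) (\<lambda>\<omega>. g (case_nat a \<omega>))) / real m"
proof -
  let ?U = "measure_pmf (pmf_of_set {..<m})"
  let ?S = "PiM (UNIV :: nat set) (\<lambda>_. ?U)"
  interpret S: sequence_space ?U
    by (intro sequence_space.intro product_prob_spaceI prob_space_measure_pmf)
  have pS: "prob_space ?S" by (intro prob_space_PiM prob_space_measure_pmf)
  interpret P: pair_prob_space ?U ?S
    by (intro pair_prob_space.intro pair_sigma_finite.intro prob_space_imp_sigma_finite prob_space_measure_pmf pS)
  have ne: "{..<m} \<noteq> {}" using m by auto
  have meas_h: "(\<lambda>(s, \<omega>). case_nat s \<omega>) \<in> measurable (?U \<Otimes>\<^sub>M ?S) ?S"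
    by measurable
  have gh: "(\<lambda>x. g (case_prod case_nat x)) \<in> borel_measurable (?U \<Otimes>\<^sub>M ?S)"
    using measurable_comp[OF meas_h g] by (simp add: comp_def case_prod_beta)
  have int: "integrable (?U \<Otimes>\<^sub>M ?S) (\<lambda>x. g (case_prod case_nat x))"
    by (rule P.integrable_const_bound[where B=K]) (use bnd gh in auto)
  have "integral\<^sup>L ?S g = integral\<^sup>L (distr (?U \<Otimes>\<^sub>M ?S) ?S (\<lambda>(s, \<omega>). case_nat s \<omega>)) g"
    by (simp add: S.PiM_iter)
  also have "\<dots> = integral\<^sup>L (?U \<Otimes>\<^sub>M ?S) (\<lambda>x. g (case_prod case_nat x))"
    by (rule integral_distr[OF meas_h g])
  also have "\<dots> = (\<integral>s. (\<integral>\<omega>. g (case_nat s \<omega>) \<partial>?S) \<partial>?U)"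
    using P.integral_fst'[OF int] by simp
  also have "\<dots> = (\<Sum>a<m. integral\<^sup>L ?S (\<lambda>\<omega>. g (case_nat a \<omega>))) / real m"
    using ne by (simp add: integral_pmf_of_set)
  finally show ?thesis .
qed

lemma stake_sum_split:
  fixes c :: "nat \<Rightarrow> real" and m a b j :: nat and \<omega> :: "nat \<Rightarrow> nat"
  assumes c0: "\<And>i. 0 \<le> c i" and cs: "summable c" "suminf c = 1"
  assumes ab: "a < m" "b < m"
  shows "stake_sum c (\<lambda>i. case_nat a (case_nat b \<omega>) i mod m \<noteq> j)
       = 1 - ((\<Sum>n. c (n+2) * of_bool (\<omega> n mod m = j)) + (if a = j then c 0 else 0) + (if b = j then c 1 else 0))"
proof -
  let ?\<sigma> = "case_nat a (case_nat b \<omega>)"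
  define g where "g = (\<lambda>i. c i * of_bool (?\<sigma> i mod m = j))"
  have sg: "summable g"
    by (rule summable_comparison_test'[OF cs(1), of 0]) (use c0 in \<open>auto simp: g_def\<close>)
  have "stake_sum c (\<lambda>i. ?\<sigma> i mod m \<noteq> j) = (\<Sum>i. c i - g i)"
    unfolding stake_sum_def g_def by (intro suminf_cong) auto
  also have "\<dots> = suminf c - suminf g"
    by (rule suminf_diff[OF cs(1) sg, symmetric])
  also have "suminf g = (\<Sum>n. g (n + 2)) + (\<Sum>i<2. g i)"
    by (rule suminf_split_initial_segment[OF sg])
  also have "(\<Sum>n. g (n + 2)) = (\<Sum>n. c (n+2) * of_bool (\<omega> n mod m = j))"
    by (simp add: g_def numeral_2_eq_2)
  also have "(\<Sum>i<2. g i) = (if a = j then c 0 else 0) + (if b = j then c 1 else 0)"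
    using ab by (simp add: g_def numeral_2_eq_2)
  finally show ?thesis using cs(2) by simp
qed

lemma main_bound:
  fixes c :: "nat \<Rightarrow> real" and m :: nat
  assumes sc: "stake_seq c" and m3: "m \<ge> 3"
  shows "real m * success_prob (1 - 1 / real m) c (1 - 1 / real m) \<le> (if m = 3 then 20/9 else real m - 1)"
proof -
  define p where "p = 1 - 1 / real m"
  define q where "q = 1 / real m"
  have m0: "m > 0" and mr: "real m > 0" using m3 by auto
  let ?U = "measure_pmf (pmf_of_set {..<m})"
  let ?S = "PiM (UNIV :: nat set) (\<lambda>_. ?U)"
  let ?B = "bern_space p"
  define Y where "Y = (\<lambda>j \<sigma> (i::nat). \<sigma> i mod m \<noteq> j)"
  have c0: "\<And>i. 0 \<le> c i" and cdec: "\<And>i. c (Suc i) \<le> c i" and csum: "c sums 1"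
    using sc by (auto simp: stake_seq_def)
  have cs: "summable c" "suminf c = 1" using csum by (auto simp: sums_iff)
  have pS: "prob_space ?S" by (intro prob_space_PiM prob_space_measure_pmf)
  interpret S: prob_space ?S by (rule pS)
  have spaceS: "space ?S = UNIV" by (simp add: space_PiM)
  have Ymeas: "Y j \<in> measurable ?S ?B" for j
    unfolding Y_def bern_space_def by (rule measurable_PiM_single') (auto simp: space_PiM)
  have ssmeas: "stake_sum c \<in> borel_measurable ?B"
    unfolding stake_sum_def bern_space_def by measurable
  have comp_meas: "(\<lambda>\<sigma>. stake_sum c (Y j \<sigma>)) \<in> borel_measurable ?S" for j
    using measurable_comp[OF Ymeas ssmeas] by (simp add: comp_def)
  define A where "A = (\<lambda>j. {\<sigma> \<in> space ?S. p \<le> stake_sum c (Y j \<sigma>)})"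
  have Asets: "A j \<in> sets ?S" for j
    unfolding A_def by (rule borel_measurable_le) (use comp_meas in auto)
  have E_sets: "{\<omega> \<in> space ?B. p \<le> stake_sum c \<omega>} \<in> sets ?B"
    by (rule borel_measurable_le) (use ssmeas in auto)
  have sp_eq: "success_prob p c p = measure ?S (A j)" if j: "j < m" for j
  proof -
    have "success_prob p c p = measure ?B {\<omega> \<in> space ?B. p \<le> stake_sum c \<omega>}"
      by (simp add: success_prob_def)
    also have "\<dots> = measure (distr ?S ?B (Y j)) {\<omega> \<in> space ?B. p \<le> stake_sum c \<omega>}"
      using distr_class[OF m0 j] by (simp add: p_def Y_def)
    also have "\<dots> = measure ?S (Y j -` {\<omega> \<in> space ?B. p \<le> stake_sum c \<omega>} \<inter> space ?S)"
      by (rule measure_distr[OF Ymeas E_sets])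
    also have "Y j -` {\<omega> \<in> space ?B. p \<le> stake_sum c \<omega>} \<inter> space ?S = A j"
      unfolding A_def using measurable_space[OF Ymeas] by auto
    finally show ?thesis .
  qed
  define Zf where "Zf = (\<lambda>\<sigma>. \<Sum>j<m. indicator (A j) \<sigma> :: real)"
  have Zf_meas: "Zf \<in> borel_measurable ?S"
    unfolding Zf_def using Asets by measurable
  have Zf_bnd: "\<bar>Zf \<sigma>\<bar> \<le> real m" for \<sigma>
  proof -
    have "Zf \<sigma> \<le> (\<Sum>j<m. 1)" unfolding Zf_def by (rule sum_mono) (simp add: indicator_def)
    moreover have "Zf \<sigma> \<ge> 0" unfolding Zf_def by (simp add: sum_nonneg)
    ultimately show ?thesis by simp
  qed
  have intZf: "integral\<^sup>L ?S Zf = real m * success_prob p c p"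
  proof -
    have "integral\<^sup>L ?S Zf = (\<Sum>j<m. integral\<^sup>L ?S (indicator (A j)))"
      unfolding Zf_def by (rule Bochner_Integration.integral_sum[where I="{..<m}" and f="\<lambda>j. indicator (A j)"]) (use Asets in \<open>auto intro!: integrable_real_indicator simp: S.emeasure_finite top.not_eq_extremum[symmetric]\<close>)
    also have "\<dots> = (\<Sum>j<m. success_prob p c p)"
      by (rule sum.cong) (use Asets sp_eq in \<open>auto simp: spaceS\<close>)
    finally show ?thesis by simp
  qed
  have cmono: "c j \<le> c i" if "i \<le> j" for i j
    using lift_Suc_antimono_le[of c, OF cdec that] .
  have sumtail: "summable (\<lambda>n. c (n + 2))" using summable_ignore_initial_segment[OF cs(1), of 2] .
  have tail: "(\<Sum>n. c (n + 2)) = 1 - c 0 - c 1"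
    using suminf_split_initial_segment[OF cs(1), of 2] cs(2) by (simp add: numeral_2_eq_2)
  have y0x: "c 0 = 1" if "c 1 = 0"
  proof -
    have "c (n + 2) = 0" for n using cmono[of 1 "n+2"] c0[of "n+2"] that by simp
    then have "(\<Sum>n. c (n + 2)) = 0" by simp
    then show ?thesis using tail that by simp
  qed
  have x0: "c 0 > 0"
  proof (rule ccontr)
    assume "\<not> c 0 > 0"
    then have "c 0 = 0" using c0[of 0] by simp
    moreover then have "c 1 = 0" using cmono[of 0 1] c0[of 1] by simp
    ultimately show False using y0x by simp
  qed
  define F where "F = (\<lambda>a b \<omega>. Zf (case_nat a (case_nat b \<omega>)))"
  have cn_meas: "(\<lambda>\<omega>. case_nat a \<omega>) \<in> measurable ?S ?S" for a :: nat
    by measurable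
  have Za_meas: "(\<lambda>\<omega>. Zf (case_nat a \<omega>)) \<in> borel_measurable ?S" for a
    using measurable_comp[OF cn_meas Zf_meas] by (simp add: comp_def)
  have F_meas: "F a b \<in> borel_measurable ?S" for a b
    using measurable_comp[OF cn_meas Za_meas[of a]] unfolding F_def by (simp add: comp_def)
  have F_int: "integrable ?S (F a b)" for a b
    by (rule S.integrable_const_bound[where B="real m"]) (use F_meas Zf_bnd in \<open>auto simp: F_def\<close>)
  have iter: "integral\<^sup>L ?S Zf = integral\<^sup>L ?S (\<lambda>\<omega>. \<Sum>a<m. \<Sum>b<m. F a b \<omega>) / (real m)^2"
  proof -
    have "integral\<^sup>L ?S Zf = (\<Sum>a<m. integral\<^sup>L ?S (\<lambda>\<omega>. Zf (case_nat a \<omega>))) / real m"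
      by (rule iter_avg[OF m0 Zf_meas Zf_bnd])
    also have "\<dots> = (\<Sum>a<m. (\<Sum>b<m. integral\<^sup>L ?S (F a b)) / real m) / real m"
    proof -
      have "integral\<^sup>L ?S (\<lambda>\<omega>. Zf (case_nat a \<omega>)) = (\<Sum>b<m. integral\<^sup>L ?S (F a b)) / real m" for a
        unfolding F_def by (rule iter_avg[OF m0 Za_meas[of a] Zf_bnd])
      then show ?thesis by simp
    qed
    also have "\<dots> = (\<Sum>a<m. \<Sum>b<m. integral\<^sup>L ?S (F a b)) / (real m)^2"
      by (simp add: sum_divide_distrib[symmetric] power2_eq_square)
    also have "(\<Sum>a<m. \<Sum>b<m. integral\<^sup>L ?S (F a b)) = integral\<^sup>L ?S (\<lambda>\<omega>. \<Sum>a<m. \<Sum>b<m. F a b \<omega>)"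
    proof -
      have "integral\<^sup>L ?S (\<lambda>\<omega>. \<Sum>b<m. F a b \<omega>) = (\<Sum>b<m. integral\<^sup>L ?S (F a b))" for a
        by (rule Bochner_Integration.integral_sum[where I="{..<m}" and f="\<lambda>b. F a b"]) (rule F_int)
      moreover have "integral\<^sup>L ?S (\<lambda>\<omega>. \<Sum>a<m. \<Sum>b<m. F a b \<omega>) = (\<Sum>a<m. integral\<^sup>L ?S (\<lambda>\<omega>. \<Sum>b<m. F a b \<omega>))"
        by (rule Bochner_Integration.integral_sum[where I="{..<m}" and f="\<lambda>a \<omega>. \<Sum>b<m. F a b \<omega>"])
           (use F_int in auto)
      ultimately show ?thesis by simp
    qed
    finally show ?thesis .
  qed
  define Bd :: real where "Bd = (if m = 3 then 20 else real m ^ 2 * (real m - 1))"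
  have pointwise: "(\<Sum>a<m. \<Sum>b<m. F a b \<omega>) \<le> Bd" for \<omega>
  proof -
    define L where "L = (\<lambda>j. \<Sum>n. c (n + 2) * of_bool (\<omega> n mod m = j))"
    have sumL: "summable (\<lambda>n. c (n + 2) * of_bool (\<omega> n mod m = j))" for j
      by (rule summable_comparison_test'[OF sumtail, of 0]) (use c0 in auto)
    have L0: "\<And>j. 0 \<le> L j" unfolding L_def by (intro suminf_nonneg sumL) (use c0 in auto)
    have tot: "c 0 + c 1 + (\<Sum>j<m. L j) = 1"
    proof -
      have "(\<Sum>j<m. L j) = (\<Sum>n. \<Sum>j<m. c (n + 2) * of_bool (\<omega> n mod m = j))"
        unfolding L_def by (rule suminf_sum[symmetric]) (rule sumL)
      also have "\<dots> = (\<Sum>n. c (n + 2))"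
      proof (rule suminf_cong)
        fix n
        have "{..<m} \<inter> {j. \<omega> n mod m = j} = {\<omega> n mod m}" using m0 by auto
        then show "(\<Sum>j<m. c (n + 2) * of_bool (\<omega> n mod m = j)) = c (n + 2)"
          by (simp add: sum_distrib_left[symmetric])
      qed
      finally show ?thesis using tail by simp
    qed
    note CB = comb_bound[OF m3 L0 x0 c0[of 1] tot y0x]
    have Feq: "F a b \<omega> = real (card {j. j < m \<and> L j + (if a = j then c 0 else 0) + (if b = j then c 1 else 0) \<le> 1 / real m})"
      if ab: "a < m" "b < m" for a b
    proof -
      have "F a b \<omega> = (\<Sum>j<m. of_bool (L j + (if a = j then c 0 else 0) + (if b = j then c 1 else 0) \<le> 1 / real m))"
        unfolding F_def Zf_def
      proof (rule sum.cong[OF refl])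
        fix j assume "j \<in> {..<m}"
        have "stake_sum c (Y j (case_nat a (case_nat b \<omega>))) = 1 - (L j + (if a = j then c 0 else 0) + (if b = j then c 1 else 0))"
          unfolding Y_def L_def using stake_sum_split[OF c0 cs(1) cs(2) ab] by simp
        then show "indicator (A j) (case_nat a (case_nat b \<omega>)) = (of_bool (L j + (if a = j then c 0 else 0) + (if b = j then c 1 else 0) \<le> 1 / real m) :: real)"
          unfolding A_def p_def by (simp add: spaceS indicator_def)
      qed
      also have "\<dots> = real (card {j. j < m \<and> L j + (if a = j then c 0 else 0) + (if b = j then c 1 else 0) \<le> 1 / real m})"
      proof -
        have "{..<m} \<inter> {j. L j + (if a = j then c 0 else 0) + (if b = j then c 1 else 0) \<le> 1 / real m}
            = {j. j < m \<and> L j + (if a = j then c 0 else 0) + (if b = j then c 1 else 0) \<le> 1 / real m}" by auto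
        then show ?thesis by simp
      qed
      finally show ?thesis .
    qed
    have "(\<Sum>a<m. \<Sum>b<m. F a b \<omega>) = (\<Sum>ab\<in>{..<m}\<times>{..<m}. F (fst ab) (snd ab) \<omega>)"
      by (simp add: sum.cartesian_product case_prod_beta)
    also have "\<dots> = (\<Sum>ab\<in>{..<m}\<times>{..<m}. real (card {j. j < m \<and> L j + (if fst ab = j then c 0 else 0) + (if snd ab = j then c 1 else 0) \<le> 1 / real m}))"
      by (rule sum.cong[OF refl]) (auto simp: Feq)
    also have "\<dots> \<le> Bd" using CB unfolding Bd_def by simp
    finally show ?thesis .
  qed
  have "integral\<^sup>L ?S (\<lambda>\<omega>. \<Sum>a<m. \<Sum>b<m. F a b \<omega>) \<le> integral\<^sup>L ?S (\<lambda>_. Bd)"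
    by (rule integral_mono) (use F_int pointwise in auto)
  also have "\<dots> = Bd" by (simp add: S.prob_space)
  finally have "real m * success_prob p c p \<le> Bd / (real m)^2"
    using iter intZf mr by (simp add: divide_right_mono)
  moreover have "Bd / (real m)^2 = (if m = 3 then 20/9 else real m - 1)"
    using mr by (auto simp: Bd_def power2_eq_square)
  ultimately show ?thesis unfolding p_def by simp
qed

lemma bound_k:
  fixes c :: "nat \<Rightarrow> real" and k :: nat
  assumes "stake_seq c" "k > 0"
  shows "success_prob ((real k + 1) / (real k + 2)) c ((real k + 1) / (real k + 2))
         \<le> (if k = 1 then 20/27 else (real k + 1) / (real k + 2))"
proof -
  have e: "1 - 1 / real (k + 2) = (real k + 1) / (real k + 2)" by (simp add: field_simps)
  have "real (k + 2) * success_prob ((real k + 1) / (real k + 2)) c ((real k + 1) / (real k + 2))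
        \<le> (if k + 2 = 3 then 20/9 else real (k + 2) - 1)"
    using main_bound[OF assms(1), of "k+2"] assms(2) unfolding e by simp
  then show ?thesis by (auto simp: field_simps split: if_splits)
qed

lemma cyl3:
  fixes p :: real and X0 X1 X2 :: "bool set"
  shows "measure (bern_space p) {\<omega> \<in> space (bern_space p). \<omega> 0 \<in> X0 \<and> \<omega> 1 \<in> X1 \<and> \<omega> 2 \<in> X2}
     = measure (measure_pmf (bernoulli_pmf p)) X0 * measure (measure_pmf (bernoulli_pmf p)) X1 * measure (measure_pmf (bernoulli_pmf p)) X2"
proof -
  let ?B = "measure_pmf (bernoulli_pmf p)"
  interpret B: product_prob_space "\<lambda>_. ?B" "UNIV :: nat set"
    by (intro product_prob_spaceI prob_space_measure_pmf)
  define X where "X = (\<lambda>i::nat. if i = 0 then X0 else if i = 1 then X1 else X2)"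
  have "{\<omega> \<in> space (bern_space p). \<omega> 0 \<in> X0 \<and> \<omega> 1 \<in> X1 \<and> \<omega> 2 \<in> X2}
      = {\<omega> \<in> space (PiM UNIV (\<lambda>_. ?B)). \<forall>i\<in>{0,1,2}. \<omega> i \<in> X i}"
    by (auto simp: bern_space_def X_def)
  then have "emeasure (bern_space p) {\<omega> \<in> space (bern_space p). \<omega> 0 \<in> X0 \<and> \<omega> 1 \<in> X1 \<and> \<omega> 2 \<in> X2}
      = (\<Prod>i\<in>{0,1,2}. emeasure ?B (X i))"
    unfolding bern_space_def by (simp only:) (rule B.emeasure_PiM_Collect, auto)
  also have "\<dots> = ennreal (measure ?B X0 * measure ?B X1 * measure ?B X2)"
    by (simp add: X_def measure_pmf.emeasure_eq_measure prod_ennreal ennreal_mult mult.assoc)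
  finally show ?thesis
    by (simp add: measure_def)
qed

lemma cyl3_sets:
  fixes p :: real and X0 X1 X2 :: "bool set"
  shows "{\<omega> \<in> space (bern_space p). \<omega> 0 \<in> X0 \<and> \<omega> 1 \<in> X1 \<and> \<omega> 2 \<in> X2} \<in> sets (bern_space p)"
proof -
  have "{\<omega> \<in> space (bern_space p). \<omega> 0 \<in> X0 \<and> \<omega> 1 \<in> X1 \<and> \<omega> 2 \<in> X2}
     = {\<omega> \<in> space (bern_space p). \<omega> 0 \<in> X0} \<inter> {\<omega> \<in> space (bern_space p). \<omega> 1 \<in> X1} \<inter> {\<omega> \<in> space (bern_space p). \<omega> 2 \<in> X2}"
    by auto
  also have "\<dots> \<in> sets (bern_space p)"
    unfolding bern_space_def by (intro sets.Int sets_Collect_single) auto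
  finally show ?thesis .
qed

lemma sp_bold:
  fixes p :: real
  assumes "0 < p" "p \<le> 1"
  shows "success_prob p (\<lambda>i. if i < 1 then 1 else 0) p = p"
proof -
  have c1: "(\<lambda>i::nat. if i < 1 then 1 else (0::real)) = (\<lambda>i. if i = 0 then 1 else 0)" by auto
  have ss: "stake_sum (\<lambda>i. if i = 0 then 1 else 0) \<omega> = of_bool (\<omega> 0)" for \<omega>
  proof -
    have "(\<lambda>i. (if i = (0::nat) then 1 else 0) * of_bool (\<omega> i)) sums (\<Sum>i\<in>{0}. (if i = (0::nat) then 1 else 0) * (of_bool (\<omega> i) :: real))"
      by (rule sums_finite) auto
    then show ?thesis unfolding stake_sum_def by (simp add: sums_iff)
  qed
  have eq: "{\<omega> \<in> space (bern_space p). p \<le> stake_sum (\<lambda>i. if i = 0 then 1 else 0) \<omega>}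
      = {\<omega> \<in> space (bern_space p). \<omega> 0 \<in> {True} \<and> \<omega> 1 \<in> UNIV \<and> \<omega> 2 \<in> UNIV}"
    using assms by (auto simp: ss)
  have "success_prob p (\<lambda>i. if i < 1 then 1 else 0) p
      = measure (bern_space p) {\<omega> \<in> space (bern_space p). \<omega> 0 \<in> {True} \<and> \<omega> 1 \<in> UNIV \<and> \<omega> 2 \<in> UNIV}"
    unfolding success_prob_def c1 eq by (rule refl)
  also have "\<dots> = measure (measure_pmf (bernoulli_pmf p)) {True} * measure (measure_pmf (bernoulli_pmf p)) UNIV * measure (measure_pmf (bernoulli_pmf p)) UNIV"
    by (rule cyl3)
  also have "\<dots> = p" using assms by (simp add: measure_pmf_single)
  finally show ?thesis .
qed

lemma sp_thirds:
  "success_prob (2/3) (\<lambda>i. if i < 3 then 1/3 else 0) (2/3) = 20/27"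
proof -
  let ?c = "\<lambda>i::nat. if i < 3 then 1/3 else (0::real)"
  let ?P = "bern_space (2/3)"
  let ?B = "measure_pmf (bernoulli_pmf (2/3))"
  have ss: "stake_sum ?c \<omega> = (of_bool (\<omega> 0) + of_bool (\<omega> 1) + of_bool (\<omega> 2)) / 3" for \<omega>
  proof -
    have "(\<lambda>i. ?c i * of_bool (\<omega> i)) sums (\<Sum>i\<in>{0,1,2}. ?c i * (of_bool (\<omega> i) :: real))"
      by (rule sums_finite) auto
    then show ?thesis unfolding stake_sum_def by (simp add: sums_iff add_divide_distrib)
  qed
  define E1 where "E1 = {\<omega> \<in> space ?P. \<omega> 0 \<in> {True} \<and> \<omega> 1 \<in> {True} \<and> \<omega> 2 \<in> UNIV}"
  define E2 where "E2 = {\<omega> \<in> space ?P. \<omega> 0 \<in> {True} \<and> \<omega> 1 \<in> {False} \<and> \<omega> 2 \<in> {True}}"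
  define E3 where "E3 = {\<omega> \<in> space ?P. \<omega> 0 \<in> {False} \<and> \<omega> 1 \<in> {True} \<and> \<omega> 2 \<in> {True}}"
  have sets: "E1 \<in> sets ?P" "E2 \<in> sets ?P" "E3 \<in> sets ?P"
    unfolding E1_def E2_def E3_def by (rule cyl3_sets)+
  have ev: "{\<omega> \<in> space ?P. 2/3 \<le> stake_sum ?c \<omega>} = E1 \<union> E2 \<union> E3"
    unfolding E1_def E2_def E3_def by (auto simp: ss)
  interpret P: prob_space ?P unfolding bern_space_def
    by (intro prob_space_PiM prob_space_measure_pmf)
  have "measure ?P (E1 \<union> E2 \<union> E3) = measure ?P (E1 \<union> E2) + measure ?P E3"
    by (rule P.finite_measure_Union) (use sets in \<open>auto simp: E1_def E2_def E3_def\<close>)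
  also have "measure ?P (E1 \<union> E2) = measure ?P E1 + measure ?P E2"
    by (rule P.finite_measure_Union) (use sets in \<open>auto simp: E1_def E2_def E3_def\<close>)
  finally have "measure ?P (E1 \<union> E2 \<union> E3) = measure ?P E1 + measure ?P E2 + measure ?P E3" .
  also have "\<dots> = 20/27"
    unfolding E1_def E2_def E3_def cyl3 by (simp add: measure_pmf_single)
  finally show ?thesis unfolding success_prob_def ev .
qed

lemma stake_seq_finite:
  fixes n :: nat
  assumes "n > 0"
  shows "stake_seq (\<lambda>i. if i < n then 1 / real n else 0)"
proof -
  have "(\<lambda>i. if i < n then 1 / real n else 0) sums (\<Sum>i\<in>{..<n}. (if i < n then 1 / real n else 0))"
    by (rule sums_finite) auto
  moreover have "(\<Sum>i\<in>{..<n}. (if i < n then 1 / real n else (0::real))) = 1" using assms by simp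
  ultimately show ?thesis unfolding stake_seq_def by auto
qed

theorem proposition13:
  fixes k :: nat and p :: real
  assumes "k > 0" and "p = (real k + 1) / (real k + 2)"
  shows "(k > 1 \<longrightarrow> pi_val p p = success_prob p (bold_play p) p \<and> pi_val p p = p)
       \<and> (k = 1 \<longrightarrow> pi_val (2/3) (2/3) =
             success_prob (2/3) (\<lambda>i. if i < 3 then 1/3 else 0) (2/3))"
proof (intro conjI impI)
  assume k1: "k > 1"
  have p01: "0 < p" "p \<le> 1" unfolding assms(2) by (auto simp: field_simps)
  have fl: "nat \<lfloor>1 / p\<rfloor> = 1"
  proof -
    have "1 / p = (real k + 2) / (real k + 1)" using assms by simp
    moreover have "1 \<le> (real k + 2) / (real k + 1)" "(real k + 2) / (real k + 1) < 2" using assms(1) by (auto simp: field_simps)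
    ultimately have "\<lfloor>1 / p\<rfloor> = 1" by (simp add: floor_eq_iff)
    then show ?thesis by simp
  qed
  have bp: "bold_play p = (\<lambda>i. if i < 1 then 1 else 0)"
    unfolding bold_play_def Let_def fl by (simp add: fun_eq_iff)
  have spb: "success_prob p (bold_play p) p = p" unfolding bp by (rule sp_bold[OF p01])
  have e1: "(\<lambda>i::nat. if i < 1 then 1 else (0::real)) = (\<lambda>i. if i < 1 then 1 / real (1::nat) else 0)" by (auto simp: fun_eq_iff)
  have ssb: "stake_seq (bold_play p)" unfolding bp e1 by (rule stake_seq_finite) simp
  have ub: "success_prob p c p \<le> p" if "stake_seq c" for c
    using bound_k[OF that assms(1)] k1 unfolding assms(2)[symmetric] by simp
  have "pi_val p p = p"
    unfolding pi_val_def
  proof (rule cSup_eq_maximum)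
    have "success_prob p (bold_play p) p \<in> {success_prob p c p |c. stake_seq c}" using ssb by blast
    then show "p \<in> {success_prob p c p |c. stake_seq c}" using spb by simp
  next
    fix x assume "x \<in> {success_prob p c p |c. stake_seq c}"
    then obtain c where "x = success_prob p c p" "stake_seq c" by blast
    then show "x \<le> p" using ub by simp
  qed
  then show "pi_val p p = success_prob p (bold_play p) p" "pi_val p p = p" using spb by auto
next
  assume k1: "k = 1"
  have ub: "success_prob (2/3) c (2/3) \<le> 20/27" if "stake_seq c" for c
    using bound_k[OF that assms(1)] k1 by simp
  have e3: "(\<lambda>i::nat. if i < 3 then 1/3 else (0::real)) = (\<lambda>i. if i < 3 then 1 / real (3::nat) else 0)" by (auto simp: fun_eq_iff)
  have ss3: "stake_seq (\<lambda>i. if i < 3 then 1/3 else 0)" unfolding e3 by (rule stake_seq_finite) simp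
  have "pi_val (2/3) (2/3) = 20/27"
    unfolding pi_val_def
  proof (rule cSup_eq_maximum)
    have "success_prob (2/3) (\<lambda>i. if i < 3 then 1/3 else 0) (2/3) \<in> {success_prob (2/3) c (2/3) |c. stake_seq c}" using ss3 by blast
    then show "20/27 \<in> {success_prob (2/3) c (2/3) |c. stake_seq c}" using sp_thirds by simp
  next
    fix x assume "x \<in> {success_prob (2/3) c (2/3) |c. stake_seq c}"
    then obtain c where "x = success_prob (2/3) c (2/3)" "stake_seq c" by blast
    then show "x \<le> 20/27" using ub by simp
  qed
  then show "pi_val (2/3) (2/3) = success_prob (2/3) (\<lambda>i. if i < 3 then 1/3 else 0) (2/3)"
    using sp_thirds by simp
qed

end
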